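(* If a pattern $\mathcal P$ is the union of a set row bounded by $n$ and a set column bounded by $m$, then $\mathcal P$ is Schur bounded with $\mathfrak s(\mathcal P)\le\sqrt n+\sqrt m$. Likewise, if $A=B+C$ where $B,C$ are nonnegative matrices, $B$ row bounded by $L$ and $C$ column bounded by $M$, then $\mathfrak s(\mathcal S(A))\le L+M$.
   Context: For a matrix $S=[s_{ij}]$, the Schur multiplier acts on bounded operators $T=[t_{ij}]$ on $\ell^2$ by $T\mapsto[s_{ij}t_{ij}]$, with norm $\|S\|_m$. For a pattern $\mathcal P\subseteq\mathbb N\times\mathbb N$, $\mathcal S(\mathcal P)$ is the set of matrices supported on $\mathcal P$ with entries of modulus at most $1$; $\mathfrak s(\mathcal P)=\sup_{X\in\mathcal S(\mathcal P)}\|X\|_m$, and $\mathcal P$ is Schur bounded if every element of $\mathcal S(\mathcal P)$ is a bounded Schur multiplier. For a nonnegative matrix $A$, $\mathcal S(A)=\{S:|s_{ij}|\le a_{ij}\}$ and $\mathfrak s(\mathcal S(A))=\sup_{S\in\mathcal S(A)}\|S\|_m$. A pattern is row bounded by $n$ if each row contains at most $n$ of its elements (column bounded similarly). A nonnegative matrix is row bounded by $L$ if $\sup_i\sum_j a_{ij}^2\le L^2$ (column bounded similarly). *)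

theory Defs
  imports Complex_Main "HOL-Library.Extended_Real"
begin

text \<open>The operator norm on l2 of a matrix is the supremum of the finite sections of its
  bilinear form over unit vectors; it is infinite iff the matrix does not define
  a bounded operator on l2.\<close>

type_synonym cmat = "nat \<Rightarrow> nat \<Rightarrow> complex"

definition op_norm :: "cmat \<Rightarrow> ereal" where
  "op_norm T = (SUP (I, J, x, y) \<in> {(I, J, x, y). finite I \<and> finite J \<and>
       (\<Sum>j\<in>J. (cmod (x j))\<^sup>2) \<le> 1 \<and> (\<Sum>i\<in>I. (cmod (y i))\<^sup>2) \<le> 1}.
       ereal (cmod (\<Sum>i\<in>I. \<Sum>j\<in>J. cnj (y i) * T i j * x j)))"

definition bounded_op :: "cmat \<Rightarrow> bool" where
  "bounded_op T \<longleftrightarrow> op_norm T < \<infinity>"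

definition schur_prod :: "cmat \<Rightarrow> cmat \<Rightarrow> cmat" where
  "schur_prod S T = (\<lambda>i j. S i j * T i j)"

definition schur_multiplier :: "cmat \<Rightarrow> bool" where
  "schur_multiplier S \<longleftrightarrow> (\<forall>T. bounded_op T \<longrightarrow> bounded_op (schur_prod S T))"

definition mult_norm :: "cmat \<Rightarrow> ereal" where
  "mult_norm S = (SUP T \<in> {T. op_norm T \<le> 1}. op_norm (schur_prod S T))"

definition pattern_mats :: "(nat \<times> nat) set \<Rightarrow> cmat set" where
  "pattern_mats P = {X. (\<forall>i j. (i, j) \<notin> P \<longrightarrow> X i j = 0) \<and> (\<forall>i j. cmod (X i j) \<le> 1)}"

definition schur_bounded :: "(nat \<times> nat) set \<Rightarrow> bool" where
  "schur_bounded P \<longleftrightarrow> (\<forall>X \<in> pattern_mats P. schur_multiplier X)"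

definition pattern_schur_const :: "(nat \<times> nat) set \<Rightarrow> ereal" where
  "pattern_schur_const P = (SUP X \<in> pattern_mats P. mult_norm X)"

definition pattern_row_bounded :: "(nat \<times> nat) set \<Rightarrow> nat \<Rightarrow> bool" where
  "pattern_row_bounded P n \<longleftrightarrow> (\<forall>i. finite {j. (i, j) \<in> P} \<and> card {j. (i, j) \<in> P} \<le> n)"

definition pattern_col_bounded :: "(nat \<times> nat) set \<Rightarrow> nat \<Rightarrow> bool" where
  "pattern_col_bounded P m \<longleftrightarrow> (\<forall>j. finite {i. (i, j) \<in> P} \<and> card {i. (i, j) \<in> P} \<le> m)"

definition dominated_mats :: "(nat \<Rightarrow> nat \<Rightarrow> real) \<Rightarrow> cmat set" where
  "dominated_mats A = {S. \<forall>i j. cmod (S i j) \<le> A i j}"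

definition mat_schur_const :: "(nat \<Rightarrow> nat \<Rightarrow> real) \<Rightarrow> ereal" where
  "mat_schur_const A = (SUP S \<in> dominated_mats A. mult_norm S)"

definition nonneg_mat :: "(nat \<Rightarrow> nat \<Rightarrow> real) \<Rightarrow> bool" where
  "nonneg_mat A \<longleftrightarrow> (\<forall>i j. 0 \<le> A i j)"

definition mat_row_bounded :: "(nat \<Rightarrow> nat \<Rightarrow> real) \<Rightarrow> real \<Rightarrow> bool" where
  "mat_row_bounded B L \<longleftrightarrow> 0 \<le> L \<and>
     (\<forall>i. summable (\<lambda>j. (B i j)\<^sup>2) \<and> (\<Sum>j. (B i j)\<^sup>2) \<le> L\<^sup>2)"

definition mat_col_bounded :: "(nat \<Rightarrow> nat \<Rightarrow> real) \<Rightarrow> real \<Rightarrow> bool" where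
  "mat_col_bounded C M \<longleftrightarrow> 0 \<le> M \<and>
     (\<forall>j. summable (\<lambda>i. (C i j)\<^sup>2) \<and> (\<Sum>i. (C i j)\<^sup>2) \<le> M\<^sup>2)"

end

theory Submission
  imports Defs "HOL-Analysis.Analysis"
begin

definition bil :: "cmat \<Rightarrow> nat set \<Rightarrow> nat set \<Rightarrow> (nat \<Rightarrow> complex) \<Rightarrow> (nat \<Rightarrow> complex) \<Rightarrow> complex" where
  "bil T I J x y = (\<Sum>i\<in>I. \<Sum>j\<in>J. cnj (y i) * T i j * x j)"

definition nrm :: "nat set \<Rightarrow> (nat \<Rightarrow> complex) \<Rightarrow> real" where
  "nrm J x = sqrt (\<Sum>j\<in>J. (cmod (x j))\<^sup>2)"

lemma CS:
  fixes a b :: "nat \<Rightarrow> real"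
  shows "(\<Sum>i\<in>I. a i * b i) \<le> sqrt (\<Sum>i\<in>I. (a i)\<^sup>2) * sqrt (\<Sum>i\<in>I. (b i)\<^sup>2)"
proof -
  have "(\<Sum>i\<in>I. a i * b i) \<le> sqrt ((\<Sum>i\<in>I. a i * b i)\<^sup>2)" by simp
  also have "\<dots> \<le> sqrt ((\<Sum>i\<in>I. (a i)\<^sup>2) * (\<Sum>i\<in>I. (b i)\<^sup>2))"
    using Cauchy_Schwarz_ineq_sum real_sqrt_le_mono by blast
  finally show ?thesis by (simp add: real_sqrt_mult)
qed

lemma nrm_nonneg: "0 \<le> nrm J x"
  unfolding nrm_def by (simp add: sum_nonneg)

lemma nrm_sq: "(nrm J x)\<^sup>2 = (\<Sum>j\<in>J. (cmod (x j))\<^sup>2)"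
  unfolding nrm_def by (simp add: sum_nonneg)

lemma op_norm_nonneg: "0 \<le> op_norm T"
proof -
  have "({}, {}, (\<lambda>_. 0), (\<lambda>_. 0)) \<in> {(I, J, x, y). finite I \<and> finite J \<and>
       (\<Sum>j\<in>J. (cmod (x j))\<^sup>2) \<le> 1 \<and> (\<Sum>i\<in>I. (cmod (y i))\<^sup>2) \<le> (1::real)}" by simp
  from SUP_upper[OF this, where f="\<lambda>(I, J, x, y). ereal (cmod (\<Sum>i\<in>I. \<Sum>j\<in>J. cnj (y i) * T i j * x j))"]
  show ?thesis unfolding op_norm_def by (rule order.trans[rotated]) simp
qed

lemma bil_le_op_norm:
  assumes "finite I" "finite J" "nrm J x \<le> 1" "nrm I y \<le> 1"
  shows "ereal (cmod (bil T I J x y)) \<le> op_norm T"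
proof -
  have "(\<Sum>j\<in>J. (cmod (x j))\<^sup>2) \<le> 1" "(\<Sum>i\<in>I. (cmod (y i))\<^sup>2) \<le> 1"
    using assms(3,4) unfolding nrm_def by (simp_all add: sum_nonneg)
  then have "(I, J, x, y) \<in> {(I, J, x, y). finite I \<and> finite J \<and>
       (\<Sum>j\<in>J. (cmod (x j))\<^sup>2) \<le> 1 \<and> (\<Sum>i\<in>I. (cmod (y i))\<^sup>2) \<le> (1::real)}" using assms by simp
  from SUP_upper[OF this, where f="\<lambda>(I, J, x, y). ereal (cmod (\<Sum>i\<in>I. \<Sum>j\<in>J. cnj (y i) * T i j * x j))"]
  show ?thesis unfolding op_norm_def bil_def by (rule order.trans[rotated]) simp
qed

lemma nrm_zero:
  assumes "finite J" "nrm J x = 0" "j \<in> J" shows "x j = 0"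
proof -
  have "(\<Sum>j\<in>J. (cmod (x j))\<^sup>2) = 0" using assms nrm_sq[of J x] by simp
  then have "\<forall>j\<in>J. (cmod (x j))\<^sup>2 = 0" using assms(1) by (subst (asm) sum_nonneg_eq_0_iff) auto
  then show ?thesis using assms by simp
qed

lemma bil_scale: "bil T I J (\<lambda>j. of_real a * x j) (\<lambda>i. of_real b * y i) = of_real (a*b) * bil T I J x y"
  unfolding bil_def by (simp add: sum_distrib_left algebra_simps)

lemma nrm_scale: "a \<ge> 0 \<Longrightarrow> nrm J (\<lambda>j. of_real a * x j) = a * nrm J x"
  unfolding nrm_def by (simp add: norm_mult power_mult_distrib sum_distrib_left[symmetric] real_sqrt_mult)

lemma opbound:
  assumes op: "op_norm T \<le> ereal c" and fin: "finite I" "finite J"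
  shows "cmod (bil T I J x y) \<le> c * nrm J x * nrm I y"
proof (cases "nrm J x = 0 \<or> nrm I y = 0")
  case True
  then have "bil T I J x y = 0"
    using nrm_zero[OF fin(2), of x] nrm_zero[OF fin(1), of y] unfolding bil_def
    by (auto intro!: sum.neutral)
  moreover have "0 \<le> c" using order.trans[OF op_norm_nonneg[of T] op] by simp
  ultimately show ?thesis using nrm_nonneg True by auto
next
  case False
  define a where "a = 1 / nrm J x"
  define b where "b = 1 / nrm I y"
  have pos: "nrm J x > 0" "nrm I y > 0" using False nrm_nonneg[of J x] nrm_nonneg[of I y] by auto
  have n1: "nrm J (\<lambda>j. of_real a * x j) \<le> 1" "nrm I (\<lambda>j. of_real b * y j) \<le> 1"
    using pos nrm_scale[of a J x] nrm_scale[of b I y] by (simp_all add: a_def b_def)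
  have "ereal (cmod (bil T I J (\<lambda>j. of_real a * x j) (\<lambda>i. of_real b * y i))) \<le> ereal c"
    by (rule order.trans[OF bil_le_op_norm[OF fin n1] op])
  then have "cmod (of_real (a*b) * bil T I J x y) \<le> c"
    by (simp only: bil_scale ereal_less_eq)
  then have "a * b * cmod (bil T I J x y) \<le> c"
    using pos by (simp only: norm_mult norm_of_real a_def b_def) (simp add: abs_mult)
  then show ?thesis using pos by (simp add: a_def b_def field_simps)
qed

lemma nrm_single: "nrm {k} (\<lambda>_. a) = cmod a"
  unfolding nrm_def by simp

lemma nrm_one: "nrm {k} (\<lambda>_. 1) = 1"
  unfolding nrm_def by simp

lemma col_lemma:
  assumes op: "op_norm T \<le> ereal c0" and c0: "0 \<le> c0" and fin: "finite I" "finite J"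
    and M: "0 \<le> M" and hS: "\<And>i j. cmod (S i j) \<le> Cm i j"
    and hC: "\<And>j I'. finite I' \<Longrightarrow> (\<Sum>i\<in>I'. (Cm i j)\<^sup>2) \<le> M\<^sup>2"
  shows "cmod (bil (\<lambda>i j. S i j * T i j) I J x y) \<le> c0 * M * nrm J x * nrm I y"
proof -
  define z where "z i = (\<lambda>j. S i j * x j)" for i
  have eq: "bil (\<lambda>i j. S i j * T i j) I J x y = (\<Sum>i\<in>I. cnj (y i) * bil T {i} J (z i) (\<lambda>_. 1))"
    unfolding bil_def z_def by (simp add: sum_distrib_left mult_ac)
  have "cmod (bil (\<lambda>i j. S i j * T i j) I J x y) \<le> (\<Sum>i\<in>I. cmod (y i) * cmod (bil T {i} J (z i) (\<lambda>_. 1)))"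
    unfolding eq by (rule order.trans[OF norm_sum]) (simp add: norm_mult)
  also have "\<dots> \<le> (\<Sum>i\<in>I. cmod (y i) * (c0 * nrm J (z i)))"
  proof (intro sum_mono mult_left_mono)
    fix i show "cmod (bil T {i} J (z i) (\<lambda>_. 1)) \<le> c0 * nrm J (z i)"
      using opbound[OF op _ fin(2), of "{i}" "z i" "\<lambda>_. 1"] nrm_one[of i] by simp
  qed simp
  also have "\<dots> = c0 * (\<Sum>i\<in>I. cmod (y i) * nrm J (z i))"
    by (simp add: sum_distrib_left mult_ac)
  also have "\<dots> \<le> c0 * (sqrt (\<Sum>i\<in>I. (cmod (y i))\<^sup>2) * sqrt (\<Sum>i\<in>I. (nrm J (z i))\<^sup>2))"
    by (intro mult_left_mono CS c0)
  also have "sqrt (\<Sum>i\<in>I. (nrm J (z i))\<^sup>2) \<le> M * nrm J x"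
  proof -
    have "(\<Sum>i\<in>I. (nrm J (z i))\<^sup>2) = (\<Sum>i\<in>I. \<Sum>j\<in>J. (cmod (S i j))\<^sup>2 * (cmod (x j))\<^sup>2)"
      unfolding nrm_sq z_def by (simp add: norm_mult power_mult_distrib)
    also have "\<dots> = (\<Sum>j\<in>J. \<Sum>i\<in>I. (cmod (S i j))\<^sup>2 * (cmod (x j))\<^sup>2)"
      by (rule sum.swap)
    also have "\<dots> \<le> (\<Sum>j\<in>J. M\<^sup>2 * (cmod (x j))\<^sup>2)"
    proof (intro sum_mono)
      fix j assume "j \<in> J"
      have "(\<Sum>i\<in>I. (cmod (S i j))\<^sup>2) \<le> (\<Sum>i\<in>I. (Cm i j)\<^sup>2)"
        by (intro sum_mono power_mono hS) auto
      also have "\<dots> \<le> M\<^sup>2" using hC fin by blast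
      finally show "(\<Sum>i\<in>I. (cmod (S i j))\<^sup>2 * (cmod (x j))\<^sup>2) \<le> M\<^sup>2 * (cmod (x j))\<^sup>2"
        by (simp add: sum_distrib_right[symmetric] mult_right_mono)
    qed
    also have "\<dots> = (M * nrm J x)\<^sup>2"
      by (simp add: power_mult_distrib nrm_sq sum_distrib_left)
    finally show ?thesis using M nrm_nonneg[of J x]
      by (metis real_sqrt_le_mono real_sqrt_abs abs_of_nonneg mult_nonneg_nonneg)
  qed
  then have "c0 * (sqrt (\<Sum>i\<in>I. (cmod (y i))\<^sup>2) * sqrt (\<Sum>i\<in>I. (nrm J (z i))\<^sup>2))
      \<le> c0 * (nrm I y * (M * nrm J x))"
    using c0 nrm_nonneg[of I y] unfolding nrm_def[of I y, symmetric]
    by (intro mult_left_mono) auto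
  finally show ?thesis by (simp add: mult_ac)
qed

lemma row_lemma:
  assumes op: "op_norm T \<le> ereal c0" and c0: "0 \<le> c0" and fin: "finite I" "finite J"
    and L: "0 \<le> L" and hS: "\<And>i j. cmod (S i j) \<le> Bm i j"
    and hB: "\<And>i J'. finite J' \<Longrightarrow> (\<Sum>j\<in>J'. (Bm i j)\<^sup>2) \<le> L\<^sup>2"
  shows "cmod (bil (\<lambda>i j. S i j * T i j) I J x y) \<le> c0 * L * nrm J x * nrm I y"
proof -
  define w where "w k = (\<lambda>i. y i * cnj (S i k))" for k
  have eq: "bil (\<lambda>i j. S i j * T i j) I J x y = (\<Sum>k\<in>J. bil T I {k} (\<lambda>_. x k) (w k))"
    unfolding bil_def w_def by (simp add: mult_ac sum.swap[of _ I J])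
  have "cmod (bil (\<lambda>i j. S i j * T i j) I J x y) \<le> (\<Sum>k\<in>J. cmod (bil T I {k} (\<lambda>_. x k) (w k)))"
    unfolding eq by (rule norm_sum)
  also have "\<dots> \<le> (\<Sum>k\<in>J. c0 * (cmod (x k) * nrm I (w k)))"
  proof (intro sum_mono)
    fix k show "cmod (bil T I {k} (\<lambda>_. x k) (w k)) \<le> c0 * (cmod (x k) * nrm I (w k))"
      using opbound[OF op fin(1), of "{k}" "\<lambda>_. x k" "w k"] nrm_single[of k "x k"] by (simp add: mult_ac)
  qed
  also have "\<dots> = c0 * (\<Sum>k\<in>J. cmod (x k) * nrm I (w k))"
    by (simp add: sum_distrib_left mult_ac)
  also have "\<dots> \<le> c0 * (sqrt (\<Sum>k\<in>J. (cmod (x k))\<^sup>2) * sqrt (\<Sum>k\<in>J. (nrm I (w k))\<^sup>2))"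
    by (intro mult_left_mono CS c0)
  also have "sqrt (\<Sum>k\<in>J. (nrm I (w k))\<^sup>2) \<le> L * nrm I y"
  proof -
    have "(\<Sum>k\<in>J. (nrm I (w k))\<^sup>2) = (\<Sum>k\<in>J. \<Sum>i\<in>I. (cmod (S i k))\<^sup>2 * (cmod (y i))\<^sup>2)"
      unfolding nrm_sq w_def by (simp add: norm_mult power_mult_distrib mult_ac)
    also have "\<dots> = (\<Sum>i\<in>I. \<Sum>k\<in>J. (cmod (S i k))\<^sup>2 * (cmod (y i))\<^sup>2)"
      by (rule sum.swap)
    also have "\<dots> \<le> (\<Sum>i\<in>I. L\<^sup>2 * (cmod (y i))\<^sup>2)"
    proof (intro sum_mono)
      fix i assume "i \<in> I"
      have "(\<Sum>k\<in>J. (cmod (S i k))\<^sup>2) \<le> (\<Sum>k\<in>J. (Bm i k)\<^sup>2)"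
        by (intro sum_mono power_mono hS) auto
      also have "\<dots> \<le> L\<^sup>2" using hB fin by blast
      finally show "(\<Sum>k\<in>J. (cmod (S i k))\<^sup>2 * (cmod (y i))\<^sup>2) \<le> L\<^sup>2 * (cmod (y i))\<^sup>2"
        by (simp add: sum_distrib_right[symmetric] mult_right_mono)
    qed
    also have "\<dots> = (L * nrm I y)\<^sup>2"
      by (simp add: power_mult_distrib nrm_sq sum_distrib_left)
    finally show ?thesis using L nrm_nonneg[of I y]
      by (metis real_sqrt_le_mono real_sqrt_abs abs_of_nonneg mult_nonneg_nonneg)
  qed
  then have "c0 * (sqrt (\<Sum>k\<in>J. (cmod (x k))\<^sup>2) * sqrt (\<Sum>k\<in>J. (nrm I (w k))\<^sup>2))
      \<le> c0 * (nrm J x * (L * nrm I y))"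
    using c0 nrm_nonneg[of J x] unfolding nrm_def[of J x, symmetric]
    by (intro mult_left_mono) auto
  finally show ?thesis by (simp add: mult_ac)
qed

lemma main_bound:
  assumes op: "op_norm T \<le> ereal c0" and c0: "0 \<le> c0" and L: "0 \<le> L" and M: "0 \<le> M"
    and Bn: "\<And>i j. 0 \<le> B i j" and Cn: "\<And>i j. 0 \<le> Cm i j"
    and hS: "\<And>i j. cmod (S i j) \<le> B i j + Cm i j"
    and hB: "\<And>i J'. finite J' \<Longrightarrow> (\<Sum>j\<in>J'. (B i j)\<^sup>2) \<le> L\<^sup>2"
    and hC: "\<And>j I'. finite I' \<Longrightarrow> (\<Sum>i\<in>I'. (Cm i j)\<^sup>2) \<le> M\<^sup>2"
  shows "op_norm (schur_prod S T) \<le> ereal ((L + M) * c0)"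
  unfolding op_norm_def
proof (rule SUP_least, clarify)
  fix I J and x y :: "nat \<Rightarrow> complex"
  assume fin: "finite I" "finite J" and hx: "(\<Sum>j\<in>J. (cmod (x j))\<^sup>2) \<le> 1"
    and hy: "(\<Sum>i\<in>I. (cmod (y i))\<^sup>2) \<le> 1"
  have nx: "nrm J x \<le> 1" using hx unfolding nrm_def by simp
  have ny: "nrm I y \<le> 1" using hy unfolding nrm_def by simp
  define S1 where "S1 i j = (if B i j + Cm i j = 0 then 0 else S i j * of_real (B i j / (B i j + Cm i j)))" for i j
  define S2 where "S2 i j = S i j - S1 i j" for i j
  have h1: "cmod (S1 i j) \<le> B i j" for i j
  proof (cases "B i j + Cm i j = 0")
    case True then show ?thesis using Bn by (simp add: S1_def)
  next
    case False
    then have pos: "B i j + Cm i j > 0" using Bn[of i j] Cn[of i j] by linarith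
    have "S1 i j = S i j * of_real (B i j / (B i j + Cm i j))"
      unfolding S1_def using False by (simp only: if_False)
    then have "cmod (S1 i j) = cmod (S i j) * (B i j / (B i j + Cm i j))"
      using Bn[of i j] pos by (simp only: norm_mult norm_of_real) simp
    also have "\<dots> \<le> (B i j + Cm i j) * (B i j / (B i j + Cm i j))"
      by (intro mult_right_mono hS) (use Bn[of i j] pos in simp)
    also have "\<dots> = B i j" using pos by simp
    finally show ?thesis .
  qed
  have h2: "cmod (S2 i j) \<le> Cm i j" for i j
  proof (cases "B i j + Cm i j = 0")
    case True then show ?thesis using hS[of i j] Cn[of i j] by (simp add: S2_def S1_def)
  next
    case False
    then have pos: "B i j + Cm i j > 0" using Bn[of i j] Cn[of i j] by linarith
    have "S2 i j = S i j * of_real (Cm i j / (B i j + Cm i j))"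
    proof -
      have nz: "complex_of_real (B i j) + complex_of_real (Cm i j) \<noteq> 0"
        using False by (metis of_real_add of_real_eq_0_iff)
      have "S i j = S i j * ((complex_of_real (B i j) + complex_of_real (Cm i j)) / (complex_of_real (B i j) + complex_of_real (Cm i j)))"
        using nz by simp
      show ?thesis using False nz by (simp add: S2_def S1_def) (simp add: field_simps nz)
    qed
    then have "cmod (S2 i j) = cmod (S i j) * (Cm i j / (B i j + Cm i j))"
      using Cn[of i j] pos by (simp only: norm_mult norm_of_real) simp
    also have "\<dots> \<le> (B i j + Cm i j) * (Cm i j / (B i j + Cm i j))"
      by (intro mult_right_mono hS) (use Cn[of i j] pos in simp)
    also have "\<dots> = Cm i j" using pos by simp
    finally show ?thesis .
  qed
  have eq: "(\<Sum>i\<in>I. \<Sum>j\<in>J. cnj (y i) * schur_prod S T i j * x j)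
      = bil (\<lambda>i j. S1 i j * T i j) I J x y + bil (\<lambda>i j. S2 i j * T i j) I J x y"
    unfolding bil_def schur_prod_def S2_def by (simp add: algebra_simps sum.distrib[symmetric])
  have "cmod (\<Sum>i\<in>I. \<Sum>j\<in>J. cnj (y i) * schur_prod S T i j * x j)
      \<le> c0 * L * nrm J x * nrm I y + c0 * M * nrm J x * nrm I y"
    unfolding eq
    by (rule order.trans[OF norm_triangle_ineq add_mono[OF row_lemma[OF op c0 fin L h1 hB]
          col_lemma[OF op c0 fin M h2 hC]]])
  also have "\<dots> \<le> c0 * L * 1 * 1 + c0 * M * 1 * 1"
    using c0 L M nx ny nrm_nonneg[of J x] nrm_nonneg[of I y]
    by (intro add_mono mult_mono) auto
  finally show "ereal (cmod (\<Sum>i\<in>I. \<Sum>j\<in>J. cnj (y i) * schur_prod S T i j * x j)) \<le> ereal ((L + M) * c0)"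
    by (simp add: algebra_simps)
qed

lemma part2:
  assumes "nonneg_mat B" "nonneg_mat C" "A = (\<lambda>i j. B i j + C i j)"
    "mat_row_bounded B L" "mat_col_bounded C M"
  shows "mat_schur_const A \<le> ereal (L + M)"
proof -
  have L: "0 \<le> L" and M: "0 \<le> M" using assms(4,5) unfolding mat_row_bounded_def mat_col_bounded_def by auto
  have Bn: "\<And>i j. 0 \<le> B i j" and Cn: "\<And>i j. 0 \<le> C i j" using assms(1,2) unfolding nonneg_mat_def by auto
  have hB: "(\<Sum>j\<in>J'. (B i j)\<^sup>2) \<le> L\<^sup>2" if "finite J'" for i J'
  proof -
    have sm: "summable (\<lambda>j. (B i j)\<^sup>2)" and le: "(\<Sum>j. (B i j)\<^sup>2) \<le> L\<^sup>2"
      using assms(4) unfolding mat_row_bounded_def by auto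
    have "(\<Sum>j\<in>J'. (B i j)\<^sup>2) \<le> (\<Sum>j. (B i j)\<^sup>2)"
      by (rule sum_le_suminf[OF sm that]) auto
    then show ?thesis using le by linarith
  qed
  have hC: "(\<Sum>i\<in>I'. (C i j)\<^sup>2) \<le> M\<^sup>2" if "finite I'" for j I'
  proof -
    have sm: "summable (\<lambda>i. (C i j)\<^sup>2)" and le: "(\<Sum>i. (C i j)\<^sup>2) \<le> M\<^sup>2"
      using assms(5) unfolding mat_col_bounded_def by auto
    have "(\<Sum>i\<in>I'. (C i j)\<^sup>2) \<le> (\<Sum>i. (C i j)\<^sup>2)"
      by (rule sum_le_suminf[OF sm that]) auto
    then show ?thesis using le by linarith
  qed
  show ?thesis
    unfolding mat_schur_const_def
  proof (rule SUP_least)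
    fix S assume "S \<in> dominated_mats A"
    then have hS: "\<And>i j. cmod (S i j) \<le> B i j + C i j" using assms(3) unfolding dominated_mats_def by auto
    show "mult_norm S \<le> ereal (L + M)"
      unfolding mult_norm_def
    proof (rule SUP_least)
      fix T assume "T \<in> {T. op_norm T \<le> 1}"
      then have op: "op_norm T \<le> ereal 1" by (simp add: one_ereal_def)
      show "op_norm (schur_prod S T) \<le> ereal (L + M)"
        using main_bound[OF op _ L M Bn Cn hS hB hC] by simp
    qed
  qed
qed

lemma part1:
  fixes R Cp :: "(nat \<times> nat) set" and n m :: nat
  assumes "P = R \<union> Cp" "pattern_row_bounded R n" "pattern_col_bounded Cp m"
  shows "schur_bounded P \<and> pattern_schur_const P \<le> ereal (sqrt n + sqrt m)"
proof -
  define B where "B i j = (if (i, j) \<in> R then 1 else 0::real)" for i j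
  define C where "C i j = (if (i, j) \<in> Cp \<and> (i, j) \<notin> R then 1 else 0::real)" for i j
  have Bn: "\<And>i j. 0 \<le> B i j" and Cn: "\<And>i j. 0 \<le> C i j" by (auto simp: B_def C_def)
  have L: "0 \<le> sqrt (real n)" and M: "0 \<le> sqrt (real m)" by auto
  have hB: "(\<Sum>j\<in>J'. (B i j)\<^sup>2) \<le> (sqrt (real n))\<^sup>2" if "finite J'" for i J'
  proof -
    have fr: "finite {j. (i, j) \<in> R}" and cr: "card {j. (i, j) \<in> R} \<le> n"
      using assms(2) unfolding pattern_row_bounded_def by auto
    have "(\<Sum>j\<in>J'. (B i j)\<^sup>2) = (\<Sum>j\<in>J'. B i j)"
      by (intro sum.cong) (auto simp: B_def)
    also have "\<dots> = (\<Sum>j\<in>J' \<inter> {j. (i, j) \<in> R}. 1)"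
      unfolding B_def by (simp only: sum.If_cases[OF that]) simp
    also have "\<dots> = real (card (J' \<inter> {j. (i, j) \<in> R}))" by simp
    also have "\<dots> \<le> real n"
      using card_mono[OF fr, of "J' \<inter> {j. (i, j) \<in> R}"] cr by auto
    finally show ?thesis by simp
  qed
  have hC: "(\<Sum>i\<in>I'. (C i j)\<^sup>2) \<le> (sqrt (real m))\<^sup>2" if "finite I'" for j I'
  proof -
    have fr: "finite {i. (i, j) \<in> Cp}" and cr: "card {i. (i, j) \<in> Cp} \<le> m"
      using assms(3) unfolding pattern_col_bounded_def by auto
    have "(\<Sum>i\<in>I'. (C i j)\<^sup>2) = (\<Sum>i\<in>I'. C i j)"
      by (intro sum.cong) (auto simp: C_def)
    also have "\<dots> = (\<Sum>i\<in>I' \<inter> {i. (i, j) \<in> Cp \<and> (i, j) \<notin> R}. 1)"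
      unfolding C_def by (simp only: sum.If_cases[OF that]) simp
    also have "\<dots> = real (card (I' \<inter> {i. (i, j) \<in> Cp \<and> (i, j) \<notin> R}))" by simp
    also have "\<dots> \<le> real m"
    proof -
      have "I' \<inter> {i. (i, j) \<in> Cp \<and> (i, j) \<notin> R} \<subseteq> {i. (i, j) \<in> Cp}" by blast
      from card_mono[OF fr this] cr show ?thesis by simp
    qed
    finally show ?thesis by simp
  qed
  have hX: "cmod (X i j) \<le> B i j + C i j" if "X \<in> pattern_mats P" for X i j
  proof (cases "(i, j) \<in> P")
    case True
    then have "(i, j) \<in> R \<or> (i, j) \<in> Cp" using assms(1) by blast
    then have "B i j + C i j = 1" unfolding B_def C_def by auto
    moreover have "cmod (X i j) \<le> 1" using that unfolding pattern_mats_def by blast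
    ultimately show ?thesis by simp
  next
    case False
    then have "X i j = 0" using that unfolding pattern_mats_def by blast
    then show ?thesis using Bn[of i j] Cn[of i j] by simp
  qed
  have sb: "schur_bounded P"
    unfolding schur_bounded_def schur_multiplier_def bounded_op_def
  proof (intro ballI allI impI)
    fix X T assume X: "X \<in> pattern_mats P" and T: "op_norm T < \<infinity>"
    define c0 where "c0 = real_of_ereal (op_norm T)"
    have "op_norm T = ereal c0" using T op_norm_nonneg[of T] unfolding c0_def
      by (cases "op_norm T") auto
    then have op: "op_norm T \<le> ereal c0" and c0: "0 \<le> c0" using op_norm_nonneg[of T] by auto
    have "op_norm (schur_prod X T) \<le> ereal ((sqrt n + sqrt m) * c0)"
      by (rule main_bound[OF op c0 L M Bn Cn hX[OF X] hB hC])
    then show "op_norm (schur_prod X T) < \<infinity>"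
      by (rule order.strict_trans1) simp
  qed
  have "pattern_schur_const P \<le> ereal (sqrt n + sqrt m)"
    unfolding pattern_schur_const_def
  proof (rule SUP_least)
    fix X assume X: "X \<in> pattern_mats P"
    show "mult_norm X \<le> ereal (sqrt n + sqrt m)"
      unfolding mult_norm_def
    proof (rule SUP_least)
      fix T assume "T \<in> {T. op_norm T \<le> 1}"
      then have op: "op_norm T \<le> ereal 1" by (simp add: one_ereal_def)
      show "op_norm (schur_prod X T) \<le> ereal (sqrt n + sqrt m)"
        using main_bound[OF op _ L M Bn Cn hX[OF X] hB hC] by simp
    qed
  qed
  with sb show ?thesis by simp
qed

theorem corollary2p6:
  shows "(\<forall>(P :: (nat \<times> nat) set) R C (n :: nat) (m :: nat).
            P = R \<union> C \<and> pattern_row_bounded R n \<and> pattern_col_bounded C m \<longrightarrow>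
            schur_bounded P \<and> pattern_schur_const P \<le> ereal (sqrt n + sqrt m))
      \<and> (\<forall>(A :: nat \<Rightarrow> nat \<Rightarrow> real) B C (L :: real) (M :: real).
            nonneg_mat B \<and> nonneg_mat C \<and> A = (\<lambda>i j. B i j + C i j) \<and>
            mat_row_bounded B L \<and> mat_col_bounded C M \<longrightarrow>
            mat_schur_const A \<le> ereal (L + M))"
proof (intro conjI allI impI)
  fix P :: "(nat \<times> nat) set" and R C and n m :: nat
  assume "P = R \<union> C \<and> pattern_row_bounded R n \<and> pattern_col_bounded C m"
  then show "schur_bounded P" "pattern_schur_const P \<le> ereal (sqrt n + sqrt m)"
    using part1[of P R C n m] by auto
next
  fix A B C :: "nat \<Rightarrow> nat \<Rightarrow> real" and L M :: real
  assume "nonneg_mat B \<and> nonneg_mat C \<and> A = (\<lambda>i j. B i j + C i j) \<and>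
            mat_row_bounded B L \<and> mat_col_bounded C M"
  then show "mat_schur_const A \<le> ereal (L + M)" using part2[of B C A L M] by auto
qed

end
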